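(* Let $G$ be a structurally saturated sequent. Then the relation $R_G$ on clusters of $G$ is a (partial) order and the relation $\le_G$ on clusters of $G$ is a preorder. If moreover $G$ is layered, then $\le_G$ on clusters is also an order.
   Context: A sequent $G$ is $\mathcal{R},\Gamma\Rightarrow\Delta$ with $\mathcal{R}$ a set of relational atoms $xRy$, $x\le y$ between labels and $\Gamma,\Delta$ multisets of labelled formulas $x{:}A$; $x\le_G y$, $xR_Gy$ mean the atom is in $\mathcal{R}$, and $x{:}C^\bullet$ means $x{:}C\in\Gamma$. $G$ is structurally saturated if: $x\le_G y$ and $x{:}C^\bullet$ imply $y{:}C^\bullet$; $xR_Gy$ and $y\le_G z$ imply some $u$ with $x\le_G u$, $uR_Gz$; $xR_Gy$ and $x\le_G z$ imply some $u$ with $y\le_G u$, $zR_Gu$; $\le_G$ and $R_G$ are transitive and reflexive on all labels. For structurally saturated $G$, a cluster is an equivalence class of $R_G\cap R_G^{-1}$. On clusters: $C_1\le_G C_2$ iff for every $y\in C_2$ there is $x\in C_1$ with $x\le_G y$; $C_1 R_G C_2$ iff there are $x\in C_1$, $y\in C_2$ with $xR_Gy$. A layer is an equivalence class of the reflexive-transitive closure of $R_G\cup R_G^{-1}$. $G$ is layered if for all labels $x,x',y,y'$: (1) if $x,y$ are in the same layer and $x\ne y$, then neither $x\le_G y$ nor $y\le_G x$; (2) if $x,y$ are in the same layer, $x',y'$ are in the same layer, $x\le_G x'$ and $x\ne x'$, then not $y'\le_G y$. *)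

theory Defs
  imports Main "HOL-Library.Multiset"
begin

datatype 'l ratom = RelAt 'l 'l | LeqAt 'l 'l

text \<open>A labelled sequent  R, Gamma => Delta ; labelled formulas are pairs (label, formula).\<close>
record ('l, 'f) sequent =
  rels  :: "'l ratom set"
  gam   :: "('l \<times> 'f) multiset"
  delta :: "('l \<times> 'f) multiset"

fun atom_labels :: "'l ratom \<Rightarrow> 'l set" where
  "atom_labels (RelAt x y) = {x, y}"
| "atom_labels (LeqAt x y) = {x, y}"

definition labels :: "('l, 'f) sequent \<Rightarrow> 'l set" where
  "labels G = (\<Union>a\<in>rels G. atom_labels a) \<union> fst ` set_mset (gam G) \<union> fst ` set_mset (delta G)"

definition leqG :: "('l, 'f) sequent \<Rightarrow> 'l \<Rightarrow> 'l \<Rightarrow> bool" where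
  "leqG G x y \<longleftrightarrow> LeqAt x y \<in> rels G"

definition relG :: "('l, 'f) sequent \<Rightarrow> 'l \<Rightarrow> 'l \<Rightarrow> bool" where
  "relG G x y \<longleftrightarrow> RelAt x y \<in> rels G"

definition struct_saturated :: "('l, 'f) sequent \<Rightarrow> bool" where
  "struct_saturated G \<longleftrightarrow>
     (\<forall>x y C. leqG G x y \<and> (x, C) \<in># gam G \<longrightarrow> (y, C) \<in># gam G) \<and>
     (\<forall>x y z. relG G x y \<and> leqG G y z \<longrightarrow> (\<exists>u. leqG G x u \<and> relG G u z)) \<and>
     (\<forall>x y z. relG G x y \<and> leqG G x z \<longrightarrow> (\<exists>u. leqG G y u \<and> relG G z u)) \<and>
     (\<forall>x y z. leqG G x y \<and> leqG G y z \<longrightarrow> leqG G x z) \<and>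
     (\<forall>x y z. relG G x y \<and> relG G y z \<longrightarrow> relG G x z) \<and>
     (\<forall>x\<in>labels G. leqG G x x) \<and>
     (\<forall>x\<in>labels G. relG G x x)"

definition clusters :: "('l, 'f) sequent \<Rightarrow> 'l set set" where
  "clusters G = labels G // {(x, y). relG G x y \<and> relG G y x}"

definition cluster_leq :: "('l, 'f) sequent \<Rightarrow> 'l set \<Rightarrow> 'l set \<Rightarrow> bool" where
  "cluster_leq G C1 C2 \<longleftrightarrow> (\<forall>y\<in>C2. \<exists>x\<in>C1. leqG G x y)"

definition cluster_R :: "('l, 'f) sequent \<Rightarrow> 'l set \<Rightarrow> 'l set \<Rightarrow> bool" where
  "cluster_R G C1 C2 \<longleftrightarrow> (\<exists>x\<in>C1. \<exists>y\<in>C2. relG G x y)"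

definition cluster_leq_rel :: "('l, 'f) sequent \<Rightarrow> ('l set \<times> 'l set) set" where
  "cluster_leq_rel G = {(C1, C2). C1 \<in> clusters G \<and> C2 \<in> clusters G \<and> cluster_leq G C1 C2}"

definition cluster_R_rel :: "('l, 'f) sequent \<Rightarrow> ('l set \<times> 'l set) set" where
  "cluster_R_rel G = {(C1, C2). C1 \<in> clusters G \<and> C2 \<in> clusters G \<and> cluster_R G C1 C2}"

definition same_layer :: "('l, 'f) sequent \<Rightarrow> 'l \<Rightarrow> 'l \<Rightarrow> bool" where
  "same_layer G x y \<longleftrightarrow>
     (x, y) \<in> ({(a, b). relG G a b} \<union> {(a, b). relG G a b}\<inverse>)\<^sup>*"

definition layered :: "('l, 'f) sequent \<Rightarrow> bool" where
  "layered G \<longleftrightarrow>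
     (\<forall>x\<in>labels G. \<forall>y\<in>labels G.
        same_layer G x y \<and> x \<noteq> y \<longrightarrow> \<not> leqG G x y \<and> \<not> leqG G y x) \<and>
     (\<forall>x\<in>labels G. \<forall>y\<in>labels G. \<forall>x'\<in>labels G. \<forall>y'\<in>labels G.
        same_layer G x y \<and> same_layer G x' y' \<and> leqG G x x' \<and> x \<noteq> x'
          \<longrightarrow> \<not> leqG G y' y)"

end

theory Submission
  imports Defs
begin

lemma rel_labels:
  assumes "relG G x y" shows "x \<in> labels G" "y \<in> labels G"
  using assms unfolding relG_def labels_def by (force, force)

lemma leq_labels:
  assumes "leqG G x y" shows "x \<in> labels G" "y \<in> labels G"
  using assms unfolding leqG_def labels_def by (force, force)

lemma cluster_form:
  assumes "C \<in> clusters G"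
  shows "\<exists>x\<in>labels G. C = {y. relG G x y \<and> relG G y x}"
  using assms unfolding clusters_def quotient_def by auto

lemma cluster_eq:
  assumes sat: "struct_saturated G" and C: "C \<in> clusters G" and D: "D \<in> clusters G"
    and a: "a \<in> C" and b: "b \<in> D" and ab: "relG G a b" and ba: "relG G b a"
  shows "C = D"
proof -
  have tr: "\<And>x y z. relG G x y \<Longrightarrow> relG G y z \<Longrightarrow> relG G x z"
    using sat unfolding struct_saturated_def by blast
  obtain x where x: "C = {y. relG G x y \<and> relG G y x}" using cluster_form[OF C] by blast
  obtain z where z: "D = {y. relG G z y \<and> relG G y z}" using cluster_form[OF D] by blast
  have ax: "relG G a x" "relG G x a" using a x by auto
  have bz: "relG G b z" "relG G z b" using b z by auto
  have xz: "relG G x z" using tr[OF tr[OF ax(2) ab] bz(1)] .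
  have zx: "relG G z x" using tr[OF tr[OF bz(2) ba] ax(1)] .
  show ?thesis unfolding x z
  proof (intro set_eqI iffI; clarify)
    fix y assume "relG G x y" "relG G y x"
    then show "relG G z y \<and> relG G y z" using tr[OF zx] tr[of y x z] xz by blast
  next
    fix y assume "relG G z y" "relG G y z"
    then show "relG G x y \<and> relG G y x" using tr[OF xz] tr[of y z x] zx by blast
  qed
qed

lemma cluster_mem_rel:
  assumes sat: "struct_saturated G" and C: "C \<in> clusters G" and a: "a \<in> C" and b: "b \<in> C"
  shows "relG G a b"
proof -
  have tr: "\<And>x y z. relG G x y \<Longrightarrow> relG G y z \<Longrightarrow> relG G x z"
    using sat unfolding struct_saturated_def by blast
  obtain x where x: "C = {y. relG G x y \<and> relG G y x}" using cluster_form[OF C] by blast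
  then have "relG G a x" "relG G x b" using a b by auto
  then show ?thesis using tr by blast
qed

lemma cluster_mem_label:
  assumes C: "C \<in> clusters G" and a: "a \<in> C"
  shows "a \<in> labels G"
proof -
  obtain x where "C = {y. relG G x y \<and> relG G y x}" using cluster_form[OF C] by blast
  then have "relG G x a" using a by auto
  then show ?thesis by (rule rel_labels(2))
qed

theorem mainTheorem5:
  fixes G :: "('l, 'f) sequent"
  assumes "struct_saturated G"
  shows "partial_order_on (clusters G) (cluster_R_rel G)
       \<and> preorder_on (clusters G) (cluster_leq_rel G)
       \<and> (layered G \<longrightarrow> partial_order_on (clusters G) (cluster_leq_rel G))"
proof -
  note sat = assms
  have trR: "\<And>x y z. relG G x y \<Longrightarrow> relG G y z \<Longrightarrow> relG G x z"
    and trL: "\<And>x y z. leqG G x y \<Longrightarrow> leqG G y z \<Longrightarrow> leqG G x z"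
    and rfR: "\<And>x. x \<in> labels G \<Longrightarrow> relG G x x"
    and rfL: "\<And>x. x \<in> labels G \<Longrightarrow> leqG G x x"
    using sat unfolding struct_saturated_def by blast+
  have ne: "\<And>C. C \<in> clusters G \<Longrightarrow> \<exists>x. x \<in> C"
  proof -
    fix C assume "C \<in> clusters G"
    then obtain x where "x \<in> labels G" "C = {y. relG G x y \<and> relG G y x}" using cluster_form by blast
    then show "\<exists>x. x \<in> C" using rfR by blast
  qed
  have P1: "partial_order_on (clusters G) (cluster_R_rel G)"
    unfolding partial_order_on_def preorder_on_def
  proof (intro conjI)
    show "cluster_R_rel G \<subseteq> clusters G \<times> clusters G" unfolding cluster_R_rel_def by auto
    show "refl_on (clusters G) (cluster_R_rel G)"
      unfolding refl_on_def cluster_R_rel_def cluster_R_def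
    proof (clarsimp)
      fix C assume C: "C \<in> clusters G"
      then obtain x where "x \<in> C" using ne by blast
      then show "\<exists>x\<in>C. \<exists>y\<in>C. relG G x y" using rfR cluster_mem_label[OF C] by blast
    qed
    show "trans (cluster_R_rel G)"
      unfolding trans_def cluster_R_rel_def cluster_R_def
    proof (clarsimp)
      fix C1 C2 C3 x1 y2 x2 y3
      assume h: "C1 \<in> clusters G" "C2 \<in> clusters G" "C3 \<in> clusters G" "x1 \<in> C1" "y2 \<in> C2"
        "relG G x1 y2" "x2 \<in> C2" "y3 \<in> C3" "relG G x2 y3"
      have "relG G y2 x2" using cluster_mem_rel[OF sat h(2) h(5) h(7)] .
      then have "relG G x1 y3" using h trR by blast
      then show "\<exists>x\<in>C1. \<exists>y\<in>C3. relG G x y" using h by blast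
    qed
    show "antisym (cluster_R_rel G)"
      unfolding antisym_on_def cluster_R_rel_def cluster_R_def
    proof (clarsimp)
      fix C1 C2 x1 y2 x2 y1
      assume h: "C1 \<in> clusters G" "C2 \<in> clusters G" "x1 \<in> C1" "y2 \<in> C2"
        "relG G x1 y2" "x2 \<in> C2" "y1 \<in> C1" "relG G x2 y1"
      have "relG G y2 x2" using cluster_mem_rel[OF sat h(2) h(4) h(6)] .
      have "relG G y1 x1" using cluster_mem_rel[OF sat h(1) h(7) h(3)] .
      have "relG G y2 x1" using \<open>relG G y2 x2\<close> \<open>relG G y1 x1\<close> h trR by blast
      show "C1 = C2" using cluster_eq[OF sat h(1) h(2) h(3) h(4) h(5) \<open>relG G y2 x1\<close>] .
    qed
  qed
  have P2: "preorder_on (clusters G) (cluster_leq_rel G)"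
    unfolding preorder_on_def
  proof (intro conjI)
    show "cluster_leq_rel G \<subseteq> clusters G \<times> clusters G" unfolding cluster_leq_rel_def by auto
    show "refl_on (clusters G) (cluster_leq_rel G)"
      unfolding refl_on_def
    proof (intro ballI)
      fix C assume C: "C \<in> clusters G"
      have "\<forall>y\<in>C. \<exists>x\<in>C. leqG G x y"
      proof
        fix y assume y: "y \<in> C"
        have "leqG G y y" using rfL[OF cluster_mem_label[OF C y]] .
        then show "\<exists>x\<in>C. leqG G x y" using y by blast
      qed
      then show "(C, C) \<in> cluster_leq_rel G" unfolding cluster_leq_rel_def cluster_leq_def using C by simp
    qed
    show "trans (cluster_leq_rel G)"
      unfolding trans_def cluster_leq_rel_def cluster_leq_def
    proof (clarsimp)
      fix C1 C2 C3 z
      assume "\<forall>y\<in>C2. \<exists>x\<in>C1. leqG G x y" "\<forall>y\<in>C3. \<exists>x\<in>C2. leqG G x y" "z \<in> C3"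
      then show "\<exists>x\<in>C1. leqG G x z" using trL by meson
    qed
  qed
  have P3: "partial_order_on (clusters G) (cluster_leq_rel G)" if lay: "layered G"
    unfolding partial_order_on_def
  proof (intro conjI P2)
    show "antisym (cluster_leq_rel G)"
      unfolding antisym_on_def cluster_leq_rel_def cluster_leq_def
    proof (clarsimp)
      fix C1 C2
      assume h: "C1 \<in> clusters G" "C2 \<in> clusters G"
        and l12: "\<forall>y\<in>C2. \<exists>x\<in>C1. leqG G x y" and l21: "\<forall>y\<in>C1. \<exists>x\<in>C2. leqG G x y"
      obtain y where y: "y \<in> C2" using ne h(2) by blast
      obtain x where x: "x \<in> C1" "leqG G x y" using l12 y by blast
      obtain x' where x': "x' \<in> C2" "leqG G x' x" using l21 x by blast
      have xy: "x = y"
      proof (rule ccontr)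
        assume ne2: "x \<noteq> y"
        have s1: "same_layer G x x" unfolding same_layer_def by simp
        have "relG G y x'" using cluster_mem_rel[OF sat h(2) y x'(1)] .
        then have s2: "same_layer G y x'" unfolding same_layer_def by blast
        have lx: "x \<in> labels G" "y \<in> labels G" "x' \<in> labels G"
          using cluster_mem_label[OF h(1) x(1)] cluster_mem_label[OF h(2) y]
            cluster_mem_label[OF h(2) x'(1)] by auto
        have L2: "\<forall>x\<in>labels G. \<forall>y\<in>labels G. \<forall>x'\<in>labels G. \<forall>y'\<in>labels G.
          same_layer G x y \<and> same_layer G x' y' \<and> leqG G x x' \<and> x \<noteq> x'
          \<longrightarrow> \<not> leqG G y' y"
          using lay unfolding layered_def by (rule conjunct2)
        have "\<not> leqG G x' x"
          using L2[rule_format, OF lx(1) lx(1) lx(2) lx(3)] s1 s2 x(2) ne2 by blast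
        then show False using x' by blast
      qed
      have "relG G x x" using rfR[OF cluster_mem_label[OF h(1) x(1)]] .
      show "C1 = C2" using cluster_eq[OF sat h(1) h(2) x(1) y] xy \<open>relG G x x\<close> by blast
    qed
  qed
  show ?thesis using P1 P2 P3 by blast
qed

end
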